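(* Let $k\ge4$, $t:=\lfloor(k-1)/2\rfloor$, and let $\mathcal{H}$ be a $(t,3k)$-superfull $3$-graph containing two disjoint sets $W_1,W_2\subseteq V(\mathcal{H})$, each of size at least $3k$, such that every pair $(w_1,w_2)\in W_1\times W_2$ has codegree exactly $t$ in $\mathcal{H}$. If $\mathcal{H}$ contains no copy of $C_k^3$, then there exists a $t$-set $L\subseteq V(\mathcal{H})\setminus(W_1\cup W_2)$ such that $N_{\mathcal{H}}(w_1w_2)=L$ for all pairs $(w_1,w_2)\in W_1\times W_2$.
   Context: For a $3$-graph $\mathcal{H}$: $\partial\mathcal{H}$ is the graph of pairs contained in some edge; $N_{\mathcal{H}}(uv)=\{w: uvw\in\mathcal{H}\}$ and the codegree is $d_{\mathcal{H}}(uv)=|N_{\mathcal{H}}(uv)|$. $\mathcal{H}$ is $d$-full if $d_{\mathcal{H}}(uv)\ge d$ for all $uv\in\partial\mathcal{H}$, and $(d,K)$-superfull if it is $d$-full and every edge of $\mathcal{H}$ contains at most one pair of vertices with codegree less than $K$. $C_k^3$ is the expansion of the $k$-cycle: add to each edge of $C_k$ a new vertex, distinct edges receiving distinct new vertices. *)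

theory Defs
  imports Main
begin

definition is_3graph :: "'a set set \<Rightarrow> bool" where
  "is_3graph H \<longleftrightarrow> finite H \<and> (\<forall>e\<in>H. card e = 3)"

definition verts :: "'a set set \<Rightarrow> 'a set" where
  "verts H = \<Union>H"

definition shadow :: "'a set set \<Rightarrow> 'a set set" where
  "shadow H = {p. card p = 2 \<and> (\<exists>e\<in>H. p \<subseteq> e)}"

definition nbhd :: "'a set set \<Rightarrow> 'a \<Rightarrow> 'a \<Rightarrow> 'a set" where
  "nbhd H u v = {w. {u, v, w} \<in> H}"

definition codeg :: "'a set set \<Rightarrow> 'a \<Rightarrow> 'a \<Rightarrow> nat" where
  "codeg H u v = card (nbhd H u v)"

definition full :: "nat \<Rightarrow> 'a set set \<Rightarrow> bool" where
  "full d H \<longleftrightarrow> (\<forall>u v. {u, v} \<in> shadow H \<longrightarrow> codeg H u v \<ge> d)"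

definition superfull :: "nat \<Rightarrow> nat \<Rightarrow> 'a set set \<Rightarrow> bool" where
  "superfull d K H \<longleftrightarrow> full d H \<and>
     (\<forall>e\<in>H. card {p. p \<subseteq> e \<and> card p = 2 \<and> (\<exists>u v. p = {u, v} \<and> codeg H u v < K)} \<le> 1)"

text \<open>H contains a copy of the expanded k-cycle C_k^3: distinct core vertices
  v_0..v_{k-1}, distinct new vertices u_0..u_{k-1} (disjoint from the core), and
  each triple {v_i, v_{i+1 mod k}, u_i} is an edge of H.\<close>
definition contains_Ck3 :: "nat \<Rightarrow> 'a set set \<Rightarrow> bool" where
  "contains_Ck3 k H \<longleftrightarrow> (\<exists>v u :: nat \<Rightarrow> 'a.
     inj_on v {..<k} \<and> inj_on u {..<k} \<and> v ` {..<k} \<inter> u ` {..<k} = {} \<and>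
     (\<forall>i<k. {v i, v ((i + 1) mod k), u i} \<in> H))"

end

theory Submission
  imports Defs
begin


fun chn :: "('b \<Rightarrow> 'a \<Rightarrow> bool) \<Rightarrow> ('b \<Rightarrow> 'a) \<Rightarrow> 'b list \<Rightarrow> 'a \<Rightarrow> bool" where
  "chn P h [] z = True"
| "chn P h (x # xs) z = (P x (if xs = [] then z else h (hd xs)) \<and> chn P h xs z)"

lemma chn_append:
  "chn P h (xs @ ys) z = (chn P h xs (if ys = [] then z else h (hd ys)) \<and> chn P h ys z)"
  by (induction xs) auto

lemma chn_nth:
  assumes "chn P h xs z" "i < length xs"
  shows "P (xs ! i) (if Suc i < length xs then h (xs ! Suc i) else z)"
  using assms
proof (induction xs arbitrary: i)
  case Nil then show ?case by simp
next
  case (Cons x xs)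
  show ?case
  proof (cases i)
    case 0
    then show ?thesis using Cons.prems by (cases xs) auto
  next
    case (Suc j)
    then show ?thesis using Cons.prems Cons.IH[of j] by auto
  qed
qed

definition okQ :: "'a set set \<Rightarrow> ('a \<times> 'a) \<Rightarrow> 'a \<Rightarrow> bool" where
  "okQ H q v' = ({fst q, v', snd q} \<in> H)"

definition okS :: "'a set set \<Rightarrow> nat \<Rightarrow> ('a \<times> 'a option) \<Rightarrow> 'a \<Rightarrow> bool" where
  "okS H K s v' = (case snd s of None \<Rightarrow> K \<le> codeg H (fst s) v' | Some r \<Rightarrow> {fst s, v', r} \<in> H)"

definition okT :: "'a set set \<Rightarrow> nat \<Rightarrow> ('a \<times> 'a \<times> bool) \<Rightarrow> 'a \<Rightarrow> bool" where
  "okT H K tr v' = (if snd (snd tr) then K \<le> codeg H (fst tr) (fst (snd tr)) \<and> K \<le> codeg H (fst (snd tr)) v'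
      else {fst tr, v', fst (snd tr)} \<in> H)"

fun desig :: "('a \<times> 'a option) list \<Rightarrow> 'a list" where
  "desig [] = []"
| "desig ((v, None) # S) = desig S"
| "desig ((v, Some r) # S) = r # desig S"

lemma desig_append: "desig (xs @ ys) = desig xs @ desig ys"
  by (induction xs rule: desig.induct) auto

lemma desig_length: "length (desig S) \<le> length S"
  by (induction S rule: desig.induct) auto

lemma realizeQ:
  assumes "length Q = k" "k > 0" "distinct (map fst Q @ map snd Q)"
    "chn (okQ H) fst Q (fst (hd Q))"
  shows "contains_Ck3 k H"
proof -
  define v where "v = (\<lambda>i. fst (Q ! i))"
  define u where "u = (\<lambda>i. snd (Q ! i))"
  have d1: "distinct (map fst Q)" and d2: "distinct (map snd Q)"
    and d3: "set (map fst Q) \<inter> set (map snd Q) = {}" using assms(3) by auto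
  have "inj_on v {..<k}"
    using d1 assms(1) unfolding v_def inj_on_def by (auto simp: distinct_conv_nth)
  moreover have "inj_on u {..<k}"
    using d2 assms(1) unfolding u_def inj_on_def by (auto simp: distinct_conv_nth)
  moreover have "v ` {..<k} \<inter> u ` {..<k} = {}"
  proof -
    have "v ` {..<k} \<subseteq> set (map fst Q)" using assms(1) unfolding v_def by auto
    moreover have "u ` {..<k} \<subseteq> set (map snd Q)" using assms(1) unfolding u_def by auto
    ultimately show ?thesis using d3 by blast
  qed
  moreover have "\<forall>i<k. {v i, v ((i + 1) mod k), u i} \<in> H"
  proof (intro allI impI)
    fix i assume i: "i < k"
    have "okQ H (Q ! i) (if Suc i < length Q then fst (Q ! Suc i) else fst (hd Q))"
      using chn_nth[OF assms(4)] i assms(1) by auto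
    moreover have "hd Q = Q ! 0" using assms(1,2) by (metis hd_conv_nth length_greater_0_conv)
    moreover have "(i + 1) mod k = (if Suc i < k then Suc i else 0)"
    proof (cases "Suc i < k")
      case False then have "Suc i = k" using i by simp
      then show ?thesis by simp
    qed simp
    ultimately show "{v i, v ((i + 1) mod k), u i} \<in> H"
      unfolding okQ_def v_def u_def using assms(1) by (auto split: if_splits)
  qed
  ultimately show ?thesis unfolding contains_Ck3_def by blast
qed

lemma expand:
  assumes "chn (okS H K) fst S z" "set (desig S) \<subseteq> Forb" "distinct (desig S)" "finite Forb"
    "card Forb + length S \<le> K"
  shows "\<exists>Q. map fst Q = map fst S \<and> chn (okQ H) fst Q z \<and> distinct (map snd Q)
           \<and> set (map snd Q) \<subseteq> set (desig S) \<union> (- Forb)"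
  using assms
proof (induction S)
  case Nil
  then show ?case by (intro exI[of _ "[]"]) auto
next
  case (Cons s S)
  obtain v e where s: "s = (v, e)" by (cases s)
  define nx where "nx = (if S = [] then z else fst (hd S))"
  have ok: "okS H K (v, e) nx" and ch: "chn (okS H K) fst S z"
    using Cons.prems(1) unfolding s nx_def by auto
  have dsub: "set (desig S) \<subseteq> Forb" and dd: "distinct (desig S)"
    using Cons.prems(2,3) unfolding s by (cases e; auto)+
  obtain Q where Q: "map fst Q = map fst S" "chn (okQ H) fst Q z" "distinct (map snd Q)"
      "set (map snd Q) \<subseteq> set (desig S) \<union> (- Forb)"
    using Cons.IH[OF ch dsub dd Cons.prems(4)] Cons.prems(5) by auto
  have nxQ: "(if Q = [] then z else fst (hd Q)) = nx"
    using Q(1) unfolding nx_def by (cases Q; cases S) auto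
  show ?case
  proof (cases e)
    case (Some r)
    have rF: "r \<in> Forb" and rd: "r \<notin> set (desig S)"
      using Cons.prems(2,3) unfolding s Some by auto
    have "r \<notin> set (map snd Q)" using Q(4) rF rd by blast
    moreover have "okQ H (v, r) nx" using ok unfolding okS_def okQ_def Some by simp
    ultimately show ?thesis using Q nxQ unfolding s Some
      by (intro exI[of _ "(v, r) # Q"]) auto
  next
    case None
    have cK: "K \<le> card (nbhd H v nx)" using ok unfolding okS_def None codeg_def by simp
    have Kpos: "K > 0" using Cons.prems(5) by simp
    then have fin: "finite (nbhd H v nx)" using cK by (metis card.infinite le_zero_eq not_gr0)
    have "card (Forb \<union> set (map snd Q)) \<le> card Forb + card (set (map snd Q))"
      by (rule card_Un_le)
    also have "card (set (map snd Q)) \<le> length S" using Q(1)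
      by (metis card_length length_map)
    finally have "card (Forb \<union> set (map snd Q)) < card (nbhd H v nx)"
      using Cons.prems(5) cK by simp
    then obtain u where u: "u \<in> nbhd H v nx" "u \<notin> Forb \<union> set (map snd Q)"
      by (metis Cons.prems(4) List.finite_set card_mono finite_UnI not_le subsetI)
    have "okQ H (v, u) nx" using u(1) unfolding nbhd_def okQ_def by simp
    then show ?thesis using Q nxQ u unfolding s None
      by (intro exI[of _ "(v, u) # Q"]) auto
  qed
qed

lemma realizeS:
  assumes "length S = k" "k > 0" "chn (okS H (3*k)) fst S (fst (hd S))"
    "distinct (map fst S @ desig S)"
  shows "contains_Ck3 k H"
proof -
  define Forb where "Forb = set (map fst S) \<union> set (desig S)"
  have "card Forb \<le> length S + length (desig S)" unfolding Forb_def
    by (metis card_Un_le card_length add_mono length_map order_trans)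
  then have cF: "card Forb + length S \<le> 3 * k" using desig_length[of S] assms(1) by simp
  obtain Q where Q: "map fst Q = map fst S" "chn (okQ H) fst Q (fst (hd S))" "distinct (map snd Q)"
      "set (map snd Q) \<subseteq> set (desig S) \<union> (- Forb)"
    using expand[OF assms(3) _ _ _ cF] assms(4) unfolding Forb_def by auto
  have lQ: "length Q = k" using Q(1) assms(1) by (metis length_map)
  have hd: "fst (hd Q) = fst (hd S)" using Q(1) assms(1,2)
    by (metis hd_map length_greater_0_conv list.map_disc_iff)
  have "distinct (map fst Q @ map snd Q)"
    using Q assms(4) unfolding Forb_def by auto
  then show ?thesis using realizeQ[OF lQ assms(2)] Q(2) hd by simp
qed

fun tsteps :: "('a \<times> 'a \<times> bool) \<Rightarrow> ('a \<times> 'a option) list" where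
  "tsteps (w, x, c) = (if c then [(w, None), (x, None)] else [(w, Some x)])"

lemma tsteps_ne: "tsteps tr \<noteq> []" and tsteps_hd: "fst (hd (tsteps tr)) = fst tr"
  by (cases tr; auto)+

lemma chn_T:
  assumes "chn (okT H K) fst T z"
  shows "chn (okS H K) fst (concat (map tsteps T)) z"
  using assms
proof (induction T)
  case Nil then show ?case by simp
next
  case (Cons tr T)
  obtain w x c where tr: "tr = (w, x, c)" by (cases tr)
  define nx where "nx = (if T = [] then z else fst (hd T))"
  have ok: "okT H K (w, x, c) nx" and ch: "chn (okT H K) fst T z"
    using Cons.prems unfolding tr nx_def by auto
  have nx2: "(if concat (map tsteps T) = [] then z else fst (hd (concat (map tsteps T)))) = nx"
    unfolding nx_def by (cases T) (auto simp: tsteps_ne tsteps_hd)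
  have "chn (okS H K) fst (tsteps (w, x, c)) nx"
    using ok by (auto simp: okT_def okS_def)
  then show ?case using Cons.IH[OF ch] nx2 unfolding tr
    by (simp add: chn_append del: tsteps.simps)
qed

lemma tsteps1: "set (map fst (tsteps tr)) \<union> set (desig (tsteps tr)) = {fst tr, fst (snd tr)}"
  by (cases tr) auto

lemma tsteps2: "length (tsteps tr) + length (desig (tsteps tr)) = 2"
  by (cases tr) auto

lemma tsteps3: "length (tsteps tr) = (if snd (snd tr) then 2 else 1)"
  by (cases tr) auto

lemma tsteps_facts:
  "set (map fst (concat (map tsteps T))) \<union> set (desig (concat (map tsteps T)))
     = set (map fst T) \<union> set (map (fst \<circ> snd) T)"
  "length (map fst (concat (map tsteps T))) + length (desig (concat (map tsteps T))) = 2 * length T"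
  "length (concat (map tsteps T)) = length T + length (filter (\<lambda>tr. snd (snd tr)) T)"
proof (induction T)
  case Nil
  {case 1 show ?case by simp}
  {case 2 show ?case by simp}
  {case 3 show ?case by simp}
next
  case (Cons tr T)
  {case 1 show ?case using Cons.IH(1) tsteps1[of tr] by (simp add: desig_append) blast}
  {case 2 show ?case using Cons.IH(2) tsteps2[of tr] by (simp add: desig_append)}
  {case 3 show ?case using Cons.IH(3) tsteps3[of tr] by simp}
qed

lemma realizeT:
  assumes "T \<noteq> []" "length T + length (filter (\<lambda>tr. snd (snd tr)) T) = k"
    "chn (okT H (3*k)) fst T (fst (hd T))"
    "distinct (map fst T @ map (fst \<circ> snd) T)"
  shows "contains_Ck3 k H"
proof -
  define S where "S = concat (map tsteps T)"
  have lS: "length S = k" using tsteps_facts(3)[of T] assms(2) unfolding S_def by simp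
  have kpos: "k > 0" using assms(1,2) by auto
  have hd: "fst (hd S) = fst (hd T)" unfolding S_def using assms(1)
    by (cases T) (auto simp: tsteps_ne tsteps_hd)
  have ch: "chn (okS H (3*k)) fst S (fst (hd S))" using chn_T[OF assms(3)] hd unfolding S_def by simp
  have "card (set (map fst T @ map (fst \<circ> snd) T)) = 2 * length T"
    using distinct_card[OF assms(4)] by simp
  then have "card (set (map fst S @ desig S)) = length (map fst S @ desig S)"
    using tsteps_facts(1,2)[of T] unfolding S_def by (simp only: set_append length_append)
  then have "distinct (map fst S @ desig S)" by (rule card_distinct)
  then show ?thesis using realizeS[OF lS kpos ch] by simp
qed



lemma nbhd_sym: "nbhd H u v = nbhd H v u"
  unfolding nbhd_def by (simp add: insert_commute)

lemma codeg_sym: "codeg H u v = codeg H v u"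
  unfolding codeg_def by (simp add: nbhd_sym)

lemma pick: "finite B \<Longrightarrow> card B < card A \<Longrightarrow> \<exists>x\<in>A. x \<notin> B"
  by (metis card_mono not_le subsetI)

lemma diff_ex: "finite A \<Longrightarrow> finite B \<Longrightarrow> card A = card B \<Longrightarrow> A \<noteq> B \<Longrightarrow> \<exists>y\<in>B. y \<notin> A"
  by (metis card_subset_eq subsetI)

lemma card3_le: "card {a, b, c} \<le> 3" by (auto simp: card_insert_if)
lemma card4_le: "card {a, b, c, d} \<le> 4" by (auto simp: card_insert_if)
lemma card5_le: "card {a, b, c, d, e} \<le> 5" by (auto simp: card_insert_if)
lemma card2_le: "card {a, b} \<le> 2" by (auto simp: card_insert_if)

lemma card3_distinct: "card {a, b, c} = 3 \<Longrightarrow> a \<noteq> b \<and> a \<noteq> c \<and> b \<noteq> c"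
  by (cases "a = b"; cases "a = c"; cases "b = c") (auto simp: card_insert_if)

locale cyc =
  fixes H :: "'a set set" and k t :: nat and W1 W2 :: "'a set"
  assumes H3: "is_3graph H" and k4: "4 \<le> k" and tdef: "t = (k - 1) div 2"
    and sf: "superfull t (3 * k) H" and disj: "W1 \<inter> W2 = {}"
    and cW1: "3 * k \<le> card W1" and cW2: "3 * k \<le> card W2"
    and cd: "\<forall>w1\<in>W1. \<forall>w2\<in>W2. codeg H w1 w2 = t"
begin

lemma t_pos: "1 \<le> t" using k4 tdef by simp
lemma t_le: "t < k" using k4 tdef by simp
lemma k_cases: "k = 2 * t + 1 \<or> k = 2 * t + 2" using k4 tdef by presburger
lemma finW1: "finite W1" using cW1 k4 by (metis card.infinite le_zero_eq mult_is_0 not_numeral_le_zero zero_neq_numeral)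
lemma finW2: "finite W2" using cW2 k4 by (metis card.infinite le_zero_eq mult_is_0 not_numeral_le_zero zero_neq_numeral)

definition opp :: "'a \<Rightarrow> 'a \<Rightarrow> bool" where
  "opp p q = (p \<in> W1 \<and> q \<in> W2 \<or> p \<in> W2 \<and> q \<in> W1)"

lemma lab_card: "opp p q \<Longrightarrow> card (nbhd H p q) = t \<and> finite (nbhd H p q)"
proof -
  assume "opp p q"
  then have "card (nbhd H p q) = t" using cd unfolding opp_def codeg_def
    by (metis nbhd_sym)
  then show ?thesis using t_pos by (metis card.infinite not_one_le_zero)
qed

lemma cross_hi0:
  assumes a: "a \<in> W1" and b: "b \<in> W2" and x: "x \<in> nbhd H a b"
  shows "3 * k \<le> codeg H a x \<and> 3 * k \<le> codeg H b x \<and> x \<notin> W1 \<and> x \<notin> W2"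
proof -
  define e where "e = {a, b, x}"
  have eH: "e \<in> H" using x unfolding e_def nbhd_def by simp
  then have "card e = 3" using H3 unfolding is_3graph_def by auto
  then have dd: "a \<noteq> b \<and> a \<noteq> x \<and> b \<noteq> x" unfolding e_def by (rule card3_distinct)
  define P where "P = {p. p \<subseteq> e \<and> card p = 2 \<and> (\<exists>u v. p = {u, v} \<and> codeg H u v < 3 * k)}"
  have cP: "card P \<le> 1" using sf eH unfolding superfull_def P_def by blast
  have fP: "finite P" unfolding P_def e_def by (rule finite_subset[of _ "Pow {a, b, x}"]) auto
  have abt: "codeg H a b = t" using cd a b by blast
  have "codeg H a b < 3 * k" using abt t_le by simp
  then have abP: "{a, b} \<in> P" unfolding P_def e_def using dd by auto
  have h1: "3 * k \<le> codeg H a x"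
  proof (rule ccontr)
    assume "\<not> ?thesis"
    then have lt: "codeg H a x < 3 * k" by simp
    have "{a, x} \<in> P" unfolding P_def e_def
    proof (intro CollectI conjI)
      show "{a, x} \<subseteq> {a, b, x}" by auto
      show "card {a, x} = 2" using dd by simp
      show "\<exists>u v. {a, x} = {u, v} \<and> codeg H u v < 3 * k" using lt by blast
    qed
    moreover have "{a, x} \<noteq> {a, b}" using dd by (metis doubleton_eq_iff)
    ultimately have "card {{a, b}, {a, x}} \<le> card P" using abP fP by (intro card_mono) auto
    then show False using cP \<open>{a, x} \<noteq> {a, b}\<close> by simp
  qed
  have h2: "3 * k \<le> codeg H b x"
  proof (rule ccontr)
    assume "\<not> ?thesis"
    then have lt: "codeg H b x < 3 * k" by simp
    have "{b, x} \<in> P" unfolding P_def e_def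
    proof (intro CollectI conjI)
      show "{b, x} \<subseteq> {a, b, x}" by auto
      show "card {b, x} = 2" using dd by simp
      show "\<exists>u v. {b, x} = {u, v} \<and> codeg H u v < 3 * k" using lt by blast
    qed
    moreover have "{b, x} \<noteq> {a, b}" using dd by (metis doubleton_eq_iff)
    ultimately have "card {{a, b}, {b, x}} \<le> card P" using abP fP by (intro card_mono) auto
    then show False using cP \<open>{b, x} \<noteq> {a, b}\<close> by simp
  qed
  have "x \<notin> W2"
  proof
    assume "x \<in> W2" then have "codeg H a x = t" using cd a by blast
    then show False using h1 t_le by simp
  qed
  moreover have "x \<notin> W1"
  proof
    assume "x \<in> W1" then have "codeg H b x = t" using cd b codeg_sym by metis
    then show False using h2 t_le by simp
  qed
  ultimately show ?thesis using h1 h2 by simp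
qed

lemma lab_hi:
  assumes "opp p q" "x \<in> nbhd H p q"
  shows "3 * k \<le> codeg H p x \<and> 3 * k \<le> codeg H q x \<and> x \<notin> W1 \<and> x \<notin> W2"
  using assms cross_hi0 nbhd_sym unfolding opp_def by metis

lemma lab_pos:
  assumes "opp p q" "x \<in> nbhd H p q"
  shows "\<exists>u\<in>W1. \<exists>v\<in>W2. x \<in> nbhd H u v \<and> {u, v} = {p, q}"
  using assms nbhd_sym unfolding opp_def by (metis insert_commute)

lemma cross_ok:
  assumes "opp p q" "x \<in> nbhd H p q"
  shows "okT H (3 * k) (p, x, c) q"
  using lab_hi[OF assms] assms(2) codeg_sym[of H x q] unfolding okT_def nbhd_def by auto

lemma link_ok:
  assumes "3 * k \<le> codeg H w x" "3 * k \<le> codeg H w' x"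
  shows "okT H (3 * k) (w, x, True) w'"
  using assms codeg_sym[of H x w'] unfolding okT_def by auto

lemma filler:
  assumes "1 \<le> n" "p \<in> W1 \<union> W2" "q \<in> W1 \<union> W2" "odd n \<longleftrightarrow> opp p q" "p \<noteq> q"
    "finite F" "p \<in> F" "q \<in> F" "card F + n \<le> 3 * k" "finite Fx" "card Fx + n \<le> t"
  shows "\<exists>seg. length seg = n \<and> seg \<noteq> [] \<and> fst (hd seg) = p \<and> chn (okT H (3 * k)) fst seg q
     \<and> distinct (map fst seg) \<and> distinct (map (fst \<circ> snd) seg)
     \<and> set (map fst seg) \<subseteq> insert p ((W1 \<union> W2) - F)
     \<and> set (map (fst \<circ> snd) seg) \<inter> (Fx \<union> W1 \<union> W2) = {}
     \<and> (\<forall>tr \<in> set seg. snd (snd tr))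
     \<and> (\<forall>x \<in> set (map (fst \<circ> snd) seg). \<exists>u\<in>W1. \<exists>v\<in>W2. x \<in> nbhd H u v \<and> (u \<notin> F \<or> v \<notin> F \<or> {u, v} = {p, q}))"
  using assms
proof (induction n arbitrary: p F Fx)
  case 0 then show ?case by simp
next
  case (Suc m)
  show ?case
  proof (cases "m = 0")
    case True
    then have op: "opp p q" using Suc.prems(4) by simp
    have "card Fx < card (nbhd H p q)" using lab_card[OF op] Suc.prems(11) True by simp
    then obtain x where x: "x \<in> nbhd H p q" "x \<notin> Fx" using pick Suc.prems(10) by blast
    have h: "x \<notin> W1" "x \<notin> W2" using lab_hi[OF op x(1)] by auto
    obtain u v where uv: "u \<in> W1" "v \<in> W2" "x \<in> nbhd H u v" "{u, v} = {p, q}"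
      using lab_pos[OF op x(1)] by blast
    show ?thesis
      by (rule exI[of _ "[(p, x, True)]"])
        (use True Suc.prems cross_ok[OF op x(1)] x h uv in auto)
  next
    case False
    define Wo where "Wo = (if p \<in> W1 then W2 else W1)"
    have cWo: "3 * k \<le> card Wo" unfolding Wo_def using cW1 cW2 by simp
    have "card F < card Wo" using Suc.prems(9) cWo False by simp
    then obtain w where w: "w \<in> Wo" "w \<notin> F" using pick Suc.prems(6) by blast
    have opw: "opp p w" using w(1) Suc.prems(2) disj unfolding Wo_def opp_def by (cases "p \<in> W1") auto
    have "card Fx < card (nbhd H p w)" using lab_card[OF opw] Suc.prems(11) False by simp
    then obtain x where x: "x \<in> nbhd H p w" "x \<notin> Fx" using pick Suc.prems(10) by blast
    have hx: "x \<notin> W1" "x \<notin> W2" using lab_hi[OF opw x(1)] by auto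
    have par: "odd m \<longleftrightarrow> opp w q"
      using Suc.prems(2,3,4) opw disj unfolding opp_def by auto
    have wq: "w \<noteq> q" using w Suc.prems(8) by auto
    have wW: "w \<in> W1 \<union> W2" using w(1) unfolding Wo_def by (cases "p \<in> W1") auto
    obtain seg where seg: "length seg = m" "seg \<noteq> []" "fst (hd seg) = w" "chn (okT H (3 * k)) fst seg q"
        "distinct (map fst seg)" "distinct (map (fst \<circ> snd) seg)"
        "set (map fst seg) \<subseteq> insert w ((W1 \<union> W2) - insert w F)"
        "set (map (fst \<circ> snd) seg) \<inter> (insert x Fx \<union> W1 \<union> W2) = {}"
        "\<forall>tr \<in> set seg. snd (snd tr)"
        "\<forall>y \<in> set (map (fst \<circ> snd) seg). \<exists>u\<in>W1. \<exists>v\<in>W2. y \<in> nbhd H u v \<and> (u \<notin> insert w F \<or> v \<notin> insert w F \<or> {u, v} = {w, q})"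
    proof -
      have a1: "1 \<le> m" using False by simp
      have a2: "q \<in> insert w F" using Suc.prems(8) by simp
      have a3: "card (insert w F) + m \<le> 3 * k" using Suc.prems(6,9) w(2) by simp
      have a4: "card (insert x Fx) + m \<le> t" using Suc.prems(10,11) x(2) by simp
      show ?thesis
        using Suc.IH[of w "insert w F" "insert x Fx", OF a1 wW Suc.prems(3) par wq _ _ a2 a3 _ a4]
          Suc.prems(6,10) that by blast
    qed
    obtain u v where uv: "u \<in> W1" "v \<in> W2" "x \<in> nbhd H u v" "{u, v} = {p, w}"
      using lab_pos[OF opw x(1)] by blast
    have pw: "p \<noteq> w" using w Suc.prems(7) by auto
    have ok1: "okT H (3 * k) (p, x, True) w" by (rule cross_ok[OF opw x(1)])
    have pos1: "u \<notin> F \<or> v \<notin> F" using uv(4) w(2) by (metis insert_iff doubleton_eq_iff)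
    have pos2: "\<forall>y \<in> set (map (fst \<circ> snd) seg). \<exists>u\<in>W1. \<exists>v\<in>W2. y \<in> nbhd H u v \<and> (u \<notin> F \<or> v \<notin> F \<or> {u, v} = {p, q})"
    proof
      fix y assume "y \<in> set (map (fst \<circ> snd) seg)"
      then obtain u v where "u\<in>W1" "v\<in>W2" "y \<in> nbhd H u v" "u \<notin> insert w F \<or> v \<notin> insert w F \<or> {u, v} = {w, q}"
        using seg(10) by blast
      then show "\<exists>u\<in>W1. \<exists>v\<in>W2. y \<in> nbhd H u v \<and> (u \<notin> F \<or> v \<notin> F \<or> {u, v} = {p, q})"
        using w(2) by (metis insertCI doubleton_eq_iff)
    qed
    have pnot: "p \<notin> set (map fst seg)" using seg(7) pw Suc.prems(7) by auto
    have xnot: "x \<notin> set (map (fst \<circ> snd) seg)" using seg(8) by auto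
    have wF: "w \<in> (W1 \<union> W2) - F" using wW w(2) by simp
    have c1: "chn (okT H (3 * k)) fst ((p, x, True) # seg) q" using ok1 seg(2,3,4) by simp
    have c2: "set (map fst ((p, x, True) # seg)) \<subseteq> insert p ((W1 \<union> W2) - F)"
      using seg(7) wF by auto
    have c3: "set (map (fst \<circ> snd) ((p, x, True) # seg)) \<inter> (Fx \<union> W1 \<union> W2) = {}"
      using seg(8) x(2) hx by auto
    have c4: "\<forall>y \<in> set (map (fst \<circ> snd) ((p, x, True) # seg)). \<exists>u\<in>W1. \<exists>v\<in>W2. y \<in> nbhd H u v \<and> (u \<notin> F \<or> v \<notin> F \<or> {u, v} = {p, q})"
      using pos2 uv pos1 by auto
    show ?thesis
      apply (rule exI[of _ "(p, x, True) # seg"])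
      using seg(1,5,6,9) pnot xnot c1 c2 c3 c4 by (simp add: comp_def)
  qed
qed


lemma filler_obt:
  assumes "1 \<le> n" "p \<in> W1 \<union> W2" "q \<in> W1 \<union> W2" "odd n \<longleftrightarrow> opp p q" "p \<noteq> q"
    "finite F" "p \<in> F" "q \<in> F" "card F + n \<le> 3 * k" "finite Fx" "card Fx + n \<le> t"
  obtains seg where "length seg = n" "seg \<noteq> []" "fst (hd seg) = p" "chn (okT H (3 * k)) fst seg q"
     "distinct (map fst seg)" "distinct (map (fst \<circ> snd) seg)"
     "set (map fst seg) \<subseteq> insert p ((W1 \<union> W2) - F)"
     "set (map (fst \<circ> snd) seg) \<inter> (Fx \<union> W1 \<union> W2) = {}"
     "\<forall>tr \<in> set seg. snd (snd tr)"
     "\<forall>x \<in> set (map (fst \<circ> snd) seg). \<exists>u\<in>W1. \<exists>v\<in>W2. x \<in> nbhd H u v \<and> (u \<notin> F \<or> v \<notin> F \<or> {u, v} = {p, q})"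
proof -
  from filler[OF assms] obtain seg where h: "length seg = n \<and> seg \<noteq> [] \<and> fst (hd seg) = p \<and> chn (okT H (3 * k)) fst seg q
     \<and> distinct (map fst seg) \<and> distinct (map (fst \<circ> snd) seg)
     \<and> set (map fst seg) \<subseteq> insert p ((W1 \<union> W2) - F)
     \<and> set (map (fst \<circ> snd) seg) \<inter> (Fx \<union> W1 \<union> W2) = {}
     \<and> (\<forall>tr \<in> set seg. snd (snd tr))
     \<and> (\<forall>x \<in> set (map (fst \<circ> snd) seg). \<exists>u\<in>W1. \<exists>v\<in>W2. x \<in> nbhd H u v \<and> (u \<notin> F \<or> v \<notin> F \<or> {u, v} = {p, q}))"
    by (elim exE)
  show ?thesis by (rule that[of seg]) (use h in blast)+
qed

lemma filt_seg: "\<forall>tr\<in>set seg. snd (snd tr) \<Longrightarrow> filter (\<lambda>tr. snd (snd tr)) seg = seg"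
  by (simp add: filter_id_conv)

lemma opp_sym: "opp p q = opp q p" unfolding opp_def by auto

lemma shape_odd:
  assumes "odd t" "3 \<le> t" "a \<in> W1" "b \<in> W2" "b' \<in> W2" "b \<noteq> b'" "nbhd H a b \<noteq> nbhd H a b'"
  shows "contains_Ck3 k H"
proof -
  have o1: "opp a b" and o2: "opp a b'" and o3: "opp b a" using assms(3,4,5) unfolding opp_def by auto
  obtain y where y: "y \<in> nbhd H a b'" "y \<notin> nbhd H a b"
    using diff_ex[of "nbhd H a b" "nbhd H a b'"] lab_card[OF o1] lab_card[OF o2] assms(7) by auto
  have hy: "y \<notin> W1" "y \<notin> W2" using lab_hi[OF o2 y(1)] by auto
  have par: "odd (t - 1) \<longleftrightarrow> opp b' b" using assms(1,2,4,5) disj unfolding opp_def by auto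
  have cF: "card {a, b, b'} + (t - 1) \<le> 3 * k"
    using card3_le[of a b b'] t_le by linarith
  have n1: "1 \<le> t - 1" using assms(2) by simp
  have pq: "b' \<noteq> b" using assms(6) by simp
  have cFx: "card {y} + (t - 1) \<le> t" using assms(2) by simp
  have pW: "b' \<in> W1 \<union> W2" and qW: "b \<in> W1 \<union> W2" using assms(4,5) by auto
  have fF: "finite {a, b, b'}" and pF: "b' \<in> {a, b, b'}" and qF: "b \<in> {a, b, b'}" and fFx: "finite {y}"
    by auto
  obtain seg where seg: "length seg = t - 1" "seg \<noteq> []" "fst (hd seg) = b'" "chn (okT H (3 * k)) fst seg b"
     "distinct (map fst seg)" "distinct (map (fst \<circ> snd) seg)"
     "set (map fst seg) \<subseteq> insert b' ((W1 \<union> W2) - {a, b, b'})"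
     "set (map (fst \<circ> snd) seg) \<inter> ({y} \<union> W1 \<union> W2) = {}"
     "\<forall>tr \<in> set seg. snd (snd tr)"
     "\<forall>x \<in> set (map (fst \<circ> snd) seg). \<exists>u\<in>W1. \<exists>v\<in>W2. x \<in> nbhd H u v \<and> (u \<notin> {a, b, b'} \<or> v \<notin> {a, b, b'} \<or> {u, v} = {b', b})"
    by (rule filler_obt[OF n1 pW qW par pq fF pF qF cF fFx cFx])
  define X where "X = set (map (fst \<circ> snd) seg)"
  have "card X \<le> t - 1" unfolding X_def using seg(1) by (metis card_length length_map)
  then have "card X < card (nbhd H a b)" using lab_card[OF o1] assms(2) by simp
  then obtain z where z: "z \<in> nbhd H a b" "z \<notin> X" using pick[of X] unfolding X_def by blast
  have hz: "z \<notin> W1" "z \<notin> W2" using lab_hi[OF o1 z(1)] by auto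
  have zy: "z \<noteq> y" using z y by auto
  define c0 where "c0 = (k = 2 * t + 2)"
  define T where "T = [(a, y, c0)] @ seg @ [(b, z, True)]"
  show ?thesis
  proof (rule realizeT[of T])
    show "T \<noteq> []" unfolding T_def by simp
    show "length T + length (filter (\<lambda>tr. snd (snd tr)) T) = k"
      unfolding T_def using filt_seg[OF seg(9)] seg(1) k_cases assms(2) unfolding c0_def by auto
    have ok1: "okT H (3 * k) (a, y, c0) b'" by (rule cross_ok[OF o2 y(1)])
    have ok2: "okT H (3 * k) (b, z, True) a" using cross_ok[OF o3] z(1) nbhd_sym by metis
    show "chn (okT H (3 * k)) fst T (fst (hd T))"
      unfolding T_def using ok1 ok2 seg(2,3,4) by (simp add: chn_append)
    have ws: "set (map fst seg) \<subseteq> insert b' ((W1 \<union> W2) - {a, b, b'})" by (rule seg(7))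
    have "distinct (map fst T)" unfolding T_def using seg(5) ws assms(3,4,5,6) disj by auto
    moreover have "distinct (map (fst \<circ> snd) T)" unfolding T_def using seg(6,8) z zy unfolding X_def
      by auto
    moreover have "set (map fst T) \<subseteq> W1 \<union> W2" unfolding T_def using ws assms(3,4,5) by auto
    moreover have "set (map (fst \<circ> snd) T) \<inter> (W1 \<union> W2) = {}" unfolding T_def using seg(8) hy hz by auto
    ultimately show "distinct (map fst T @ map (fst \<circ> snd) T)" by auto
  qed
qed


lemma pick_out2:
  assumes "finite X" "card X + 1 < card B" "x \<notin> B \<or> r \<notin> B"
  shows "\<exists>z\<in>B. z \<notin> X \<and> z \<noteq> x \<and> z \<noteq> r"
proof -
  define Z where "Z = X \<union> ({x, r} \<inter> B)"
  have "card ({x, r} \<inter> B) \<le> 1" using assms(3) by (auto simp: card_insert_if Int_insert_left)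
  then have "card Z < card B" unfolding Z_def using assms(2) card_Un_le[of X "{x, r} \<inter> B"] by linarith
  then obtain z where "z \<in> B" "z \<notin> Z" using pick[of Z B] assms(1) unfolding Z_def by auto
  then show ?thesis unfolding Z_def by auto
qed

lemma shape_link_a:
  assumes "even t" "4 \<le> t" "w1 \<in> W1" "w2 \<in> W1" "w1 \<noteq> w2"
    "3 * k \<le> codeg H w1 x" "3 * k \<le> codeg H w2 x" "x \<notin> W1" "x \<notin> W2"
    "f \<in> W2" "f' \<in> W2" "f \<noteq> f'" "nbhd H w2 f \<noteq> nbhd H w1 f'"
  shows "contains_Ck3 k H"
proof -
  have o1: "opp w2 f" and o2: "opp w1 f'" and o3: "opp f' w1" using assms(3,4,10,11) unfolding opp_def by auto
  have cA: "card (nbhd H w2 f) = t" "finite (nbhd H w2 f)" using lab_card[OF o1] by auto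
  have cB: "card (nbhd H w1 f') = t" "finite (nbhd H w1 f')" using lab_card[OF o2] by auto
  obtain y where y: "y \<in> nbhd H w2 f" "y \<notin> nbhd H w1 f'"
    using diff_ex[of "nbhd H w1 f'" "nbhd H w2 f"] cA cB assms(13) by auto
  obtain rA where rA: "rA \<in> nbhd H w2 f" "rA \<noteq> x" "x \<notin> nbhd H w1 f' \<or> rA \<notin> nbhd H w1 f'"
  proof (cases "x = y")
    case True
    have "card {x} < card (nbhd H w2 f)" using cA assms(2) by simp
    then obtain r where "r \<in> nbhd H w2 f" "r \<notin> {x}" using pick[of "{x}"] by blast
    then show ?thesis using that True y by auto
  next
    case False then show ?thesis using that y by auto
  qed
  have hrA: "rA \<notin> W1" "rA \<notin> W2" using lab_hi[OF o1 rA(1)] by auto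
  have n1: "1 \<le> t - 2" using assms(2) by simp
  have par: "odd (t - 2) \<longleftrightarrow> opp f f'" using assms(1,2,10,11) disj unfolding opp_def by auto
  have pq: "f \<noteq> f'" by (rule assms(12))
  have cF: "card {w1, w2, f, f'} + (t - 2) \<le> 3 * k" using card4_le[of w1 w2 f f'] t_le assms(2) by linarith
  have cFx: "card {x, rA} + (t - 2) \<le> t" using card2_le[of x rA] assms(2) by linarith
  have pW: "f \<in> W1 \<union> W2" and qW: "f' \<in> W1 \<union> W2" using assms(10,11) by auto
  have fF: "finite {w1, w2, f, f'}" and pF: "f \<in> {w1, w2, f, f'}" and qF: "f' \<in> {w1, w2, f, f'}"
    and fFx: "finite {x, rA}" by auto
  obtain seg where seg: "length seg = t - 2" "seg \<noteq> []" "fst (hd seg) = f" "chn (okT H (3 * k)) fst seg f'"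
     "distinct (map fst seg)" "distinct (map (fst \<circ> snd) seg)"
     "set (map fst seg) \<subseteq> insert f ((W1 \<union> W2) - {w1, w2, f, f'})"
     "set (map (fst \<circ> snd) seg) \<inter> ({x, rA} \<union> W1 \<union> W2) = {}"
     "\<forall>tr \<in> set seg. snd (snd tr)"
     "\<forall>z \<in> set (map (fst \<circ> snd) seg). \<exists>u\<in>W1. \<exists>v\<in>W2. z \<in> nbhd H u v \<and> (u \<notin> {w1, w2, f, f'} \<or> v \<notin> {w1, w2, f, f'} \<or> {u, v} = {f, f'})"
    by (rule filler_obt[OF n1 pW qW par pq fF pF qF cF fFx cFx])
  define X where "X = set (map (fst \<circ> snd) seg)"
  have "card X \<le> t - 2" unfolding X_def using seg(1) by (metis card_length length_map)
  then have "card X + 1 < card (nbhd H w1 f')" using cB assms(2) by simp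
  then obtain rB where rB: "rB \<in> nbhd H w1 f'" "rB \<notin> X" "rB \<noteq> x" "rB \<noteq> rA"
    using pick_out2[of X "nbhd H w1 f'" x rA] rA(3) unfolding X_def by auto
  have hrB: "rB \<notin> W1" "rB \<notin> W2" using lab_hi[OF o2 rB(1)] by auto
  define c where "c = (k = 2 * t + 2)"
  define T where "T = [(w1, x, True), (w2, rA, c)] @ seg @ [(f', rB, True)]"
  show ?thesis
  proof (rule realizeT[of T])
    show "T \<noteq> []" unfolding T_def by simp
    show "length T + length (filter (\<lambda>tr. snd (snd tr)) T) = k"
      unfolding T_def using filt_seg[OF seg(9)] seg(1) k_cases assms(2) unfolding c_def by auto
    have ok0: "okT H (3 * k) (w1, x, True) w2" by (rule link_ok[OF assms(6,7)])
    have ok1: "okT H (3 * k) (w2, rA, c) f" by (rule cross_ok[OF o1 rA(1)])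
    have ok2: "okT H (3 * k) (f', rB, True) w1" using cross_ok[OF o3] rB(1) nbhd_sym by metis
    show "chn (okT H (3 * k)) fst T (fst (hd T))"
      unfolding T_def using ok0 ok1 ok2 seg(2,3,4) by (simp add: chn_append)
    have ws: "set (map fst seg) \<subseteq> insert f ((W1 \<union> W2) - {w1, w2, f, f'})" by (rule seg(7))
    have "distinct (map fst T)" unfolding T_def using seg(5) ws assms(3,4,5,10,11,12) disj by auto
    moreover have "distinct (map (fst \<circ> snd) T)" unfolding T_def using seg(6,8) rA(2) rB unfolding X_def
      by auto
    moreover have "set (map fst T) \<subseteq> W1 \<union> W2" unfolding T_def using ws assms(3,4,10,11) by auto
    moreover have "set (map (fst \<circ> snd) T) \<inter> (W1 \<union> W2) = {}" unfolding T_def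
      using seg(8) hrA hrB assms(8,9) by auto
    ultimately show "distinct (map fst T @ map (fst \<circ> snd) T)" by auto
  qed
qed


lemma pick_out3:
  assumes "finite X" "card X + 2 < card B" "x \<notin> B \<or> r \<notin> B"
  shows "\<exists>z\<in>B. z \<notin> X \<and> z \<noteq> x \<and> z \<noteq> r \<and> z \<noteq> r2"
proof -
  define Z where "Z = insert r2 (X \<union> ({x, r} \<inter> B))"
  have "card ({x, r} \<inter> B) \<le> 1" using assms(3) by (auto simp: card_insert_if Int_insert_left)
  moreover have "card Z \<le> Suc (card (X \<union> ({x, r} \<inter> B)))" unfolding Z_def
    using assms(1) by (simp add: card_insert_if)
  ultimately have "card Z < card B" using assms(2) card_Un_le[of X "{x, r} \<inter> B"] by linarith
  then obtain z where "z \<in> B" "z \<notin> Z" using pick[of Z B] assms(1) unfolding Z_def by auto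
  then show ?thesis unfolding Z_def by auto
qed

lemma shape_link_b:
  assumes "even t" "4 \<le> t" "w1 \<in> W1" "w2 \<in> W1" "w1 \<noteq> w2"
    "3 * k \<le> codeg H w1 x" "3 * k \<le> codeg H w2 x" "x \<notin> W1" "x \<notin> W2"
    "f \<in> W2" "f' \<in> W2" "f \<noteq> f'" "e \<in> W1" "e \<noteq> w1" "e \<noteq> w2"
    "nbhd H w1 f' = nbhd H w2 f" "nbhd H e f \<noteq> nbhd H w2 f"
  shows "contains_Ck3 k H"
proof -
  have o1: "opp w2 f" and o2: "opp w1 f'" and o3: "opp f' w1" and o4: "opp f e" and o5: "opp e f"
    using assms(3,4,10,11,13) unfolding opp_def by auto
  have cA: "card (nbhd H w2 f) = t" "finite (nbhd H w2 f)" using lab_card[OF o1] by auto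
  have cE: "card (nbhd H e f) = t" "finite (nbhd H e f)" using lab_card[OF o5] by auto
  obtain y where y: "y \<in> nbhd H e f" "y \<notin> nbhd H w2 f"
    using diff_ex[of "nbhd H w2 f" "nbhd H e f"] cA cE assms(17) by auto
  obtain rfe where rfe: "rfe \<in> nbhd H e f" "rfe \<noteq> x" "x \<notin> nbhd H w2 f \<or> rfe \<notin> nbhd H w2 f"
  proof (cases "x = y")
    case True
    have "card {x} < card (nbhd H e f)" using cE assms(2) by simp
    then obtain r where "r \<in> nbhd H e f" "r \<notin> {x}" using pick[of "{x}"] by blast
    then show ?thesis using that True y by auto
  next
    case False then show ?thesis using that y by auto
  qed
  have "card {x, rfe} < card (nbhd H w2 f)" using cA assms(2) card2_le[of x rfe] by simp
  then obtain rA where rA: "rA \<in> nbhd H w2 f" "rA \<notin> {x, rfe}" using pick[of "{x, rfe}"] by blast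
  have hrA: "rA \<notin> W1" "rA \<notin> W2" using lab_hi[OF o1 rA(1)] by auto
  have hrfe: "rfe \<notin> W1" "rfe \<notin> W2" using lab_hi[OF o5 rfe(1)] by auto
  have n1: "1 \<le> t - 3" using assms(2) by simp
  have par: "odd (t - 3) \<longleftrightarrow> opp e f'" using assms(1,2,11,13) disj unfolding opp_def by auto
  have pq: "e \<noteq> f'" using assms(11,13) disj by auto
  have cF: "card {w1, w2, f, e, f'} + (t - 3) \<le> 3 * k" using card5_le[of w1 w2 f e f'] t_le assms(2) by linarith
  have cFx: "card {x, rfe, rA} + (t - 3) \<le> t" using card3_le[of x rfe rA] assms(2) by linarith
  have pW: "e \<in> W1 \<union> W2" and qW: "f' \<in> W1 \<union> W2" using assms(11,13) by auto
  have fF: "finite {w1, w2, f, e, f'}" and pF: "e \<in> {w1, w2, f, e, f'}" and qF: "f' \<in> {w1, w2, f, e, f'}"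
    and fFx: "finite {x, rfe, rA}" by auto
  obtain seg where seg: "length seg = t - 3" "seg \<noteq> []" "fst (hd seg) = e" "chn (okT H (3 * k)) fst seg f'"
     "distinct (map fst seg)" "distinct (map (fst \<circ> snd) seg)"
     "set (map fst seg) \<subseteq> insert e ((W1 \<union> W2) - {w1, w2, f, e, f'})"
     "set (map (fst \<circ> snd) seg) \<inter> ({x, rfe, rA} \<union> W1 \<union> W2) = {}"
     "\<forall>tr \<in> set seg. snd (snd tr)"
     "\<forall>z \<in> set (map (fst \<circ> snd) seg). \<exists>u\<in>W1. \<exists>v\<in>W2. z \<in> nbhd H u v \<and> (u \<notin> {w1, w2, f, e, f'} \<or> v \<notin> {w1, w2, f, e, f'} \<or> {u, v} = {e, f'})"
    by (rule filler_obt[OF n1 pW qW par pq fF pF qF cF fFx cFx])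
  define X where "X = set (map (fst \<circ> snd) seg)"
  have "card X \<le> t - 3" unfolding X_def using seg(1) by (metis card_length length_map)
  then have "card X + 2 < card (nbhd H w2 f)" using cA assms(2) by simp
  then obtain rB where rB: "rB \<in> nbhd H w2 f" "rB \<notin> X" "rB \<noteq> x" "rB \<noteq> rfe" "rB \<noteq> rA"
    using pick_out3[of X "nbhd H w2 f" x rfe rA] rfe(3) unfolding X_def by auto
  have hrB: "rB \<notin> W1" "rB \<notin> W2" using lab_hi[OF o1 rB(1)] by auto
  define c where "c = (k = 2 * t + 2)"
  define T where "T = [(w1, x, True), (w2, rA, c), (f, rfe, True)] @ seg @ [(f', rB, True)]"
  show ?thesis
  proof (rule realizeT[of T])
    show "T \<noteq> []" unfolding T_def by simp
    show "length T + length (filter (\<lambda>tr. snd (snd tr)) T) = k"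
      unfolding T_def using filt_seg[OF seg(9)] seg(1) k_cases assms(2) unfolding c_def by auto
    have ok0: "okT H (3 * k) (w1, x, True) w2" by (rule link_ok[OF assms(6,7)])
    have ok1: "okT H (3 * k) (w2, rA, c) f" by (rule cross_ok[OF o1 rA(1)])
    have ok2: "okT H (3 * k) (f, rfe, True) e" using cross_ok[OF o4] rfe(1) nbhd_sym by metis
    have ok3: "okT H (3 * k) (f', rB, True) w1" using cross_ok[OF o3] rB(1) assms(16) nbhd_sym by metis
    show "chn (okT H (3 * k)) fst T (fst (hd T))"
      unfolding T_def using ok0 ok1 ok2 ok3 seg(2,3,4) by (simp add: chn_append)
    have ws: "set (map fst seg) \<subseteq> insert e ((W1 \<union> W2) - {w1, w2, f, e, f'})" by (rule seg(7))
    have "distinct (map fst T)" unfolding T_def using seg(5) ws assms(3,4,5,10,11,12,13,14,15) disj by auto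
    moreover have "distinct (map (fst \<circ> snd) T)" unfolding T_def using seg(6,8) rA(2) rfe(2) rB unfolding X_def
      by auto
    moreover have "set (map fst T) \<subseteq> W1 \<union> W2" unfolding T_def using ws assms(3,4,10,11,13) by auto
    moreover have "set (map (fst \<circ> snd) T) \<inter> (W1 \<union> W2) = {}" unfolding T_def
      using seg(8) hrA hrB hrfe assms(8,9) by auto
    ultimately show "distinct (map fst T @ map (fst \<circ> snd) T)" by auto
  qed
qed


lemma three_W2: obtains f1 f2 f3 where "f1 \<in> W2" "f2 \<in> W2" "f3 \<in> W2" "f1 \<noteq> f2" "f1 \<noteq> f3" "f2 \<noteq> f3"
proof -
  have c: "3 < card W2" using cW2 k4 by linarith
  obtain f1 where f1: "f1 \<in> W2" using pick[of "{}" W2] c by auto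
  obtain f2 where f2: "f2 \<in> W2" "f2 \<notin> {f1}" using pick[of "{f1}" W2] c by auto
  obtain f3 where f3: "f3 \<in> W2" "f3 \<notin> {f1, f2}" using pick[of "{f1, f2}" W2] c card2_le[of f1 f2] by auto
  show ?thesis using that f1 f2 f3 by auto
qed

lemma other_W2: assumes "f \<in> W2" obtains f' where "f' \<in> W2" "f' \<noteq> f"
proof -
  have c: "3 < card W2" using cW2 k4 by linarith
  obtain f' where "f' \<in> W2" "f' \<notin> {f}" using pick[of "{f}" W2] c by auto
  then show ?thesis using that by auto
qed

lemma other_W1: assumes "f \<in> W1" obtains f' where "f' \<in> W1" "f' \<noteq> f"
proof -
  have c: "3 < card W1" using cW1 k4 by linarith
  obtain f' where "f' \<in> W1" "f' \<notin> {f}" using pick[of "{f}" W1] c by auto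
  then show ?thesis using that by auto
qed

lemma shape_link:
  assumes "even t" "4 \<le> t" "w1 \<in> W1" "w2 \<in> W1" "w1 \<noteq> w2"
    "3 * k \<le> codeg H w1 x" "3 * k \<le> codeg H w2 x" "x \<notin> W1" "x \<notin> W2"
    "a1 \<in> W1" "b1 \<in> W2" "a2 \<in> W1" "b2 \<in> W2" "nbhd H a1 b1 \<noteq> nbhd H a2 b2"
  shows "contains_Ck3 k H"
proof (cases "\<exists>f\<in>W2. \<exists>f'\<in>W2. f \<noteq> f' \<and> nbhd H w2 f \<noteq> nbhd H w1 f'")
  case True
  then obtain f f' where "f \<in> W2" "f' \<in> W2" "f \<noteq> f'" "nbhd H w2 f \<noteq> nbhd H w1 f'" by blast
  then show ?thesis using shape_link_a[OF assms(1-9)] by blast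
next
  case False
  then have F: "\<And>f f'. f \<in> W2 \<Longrightarrow> f' \<in> W2 \<Longrightarrow> f \<noteq> f' \<Longrightarrow> nbhd H w2 f = nbhd H w1 f'" by blast
  obtain f1 f2 f3 where fs: "f1 \<in> W2" "f2 \<in> W2" "f3 \<in> W2" "f1 \<noteq> f2" "f1 \<noteq> f3" "f2 \<noteq> f3"
    by (rule three_W2)
  define T0 where "T0 = nbhd H w2 f1"
  have r2: "nbhd H w2 f = T0" if "f \<in> W2" for f
  proof (cases "f = f2")
    case True
    have "nbhd H w2 f2 = nbhd H w1 f1" using F fs by metis
    also have "\<dots> = nbhd H w2 f3" using F fs by metis
    also have "\<dots> = nbhd H w1 f2" using F fs by metis
    also have "\<dots> = T0" unfolding T0_def using F fs by metis
    finally show ?thesis using True by simp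
  next
    case False
    have "nbhd H w2 f = nbhd H w1 f2" using F fs that False by metis
    also have "\<dots> = T0" unfolding T0_def using F fs by metis
    finally show ?thesis .
  qed
  have r1: "nbhd H w1 f = T0" if "f \<in> W2" for f
  proof (cases "f = f1")
    case True
    then have "nbhd H w1 f = nbhd H w2 f2" using F fs by metis
    then show ?thesis using r2 fs by simp
  next
    case False
    then have "nbhd H w1 f = nbhd H w2 f1" using F fs that by metis
    then show ?thesis using r2 fs by simp
  qed
  obtain e f where ef: "e \<in> W1" "f \<in> W2" "nbhd H e f \<noteq> T0"
    using assms(10-14) by metis
  have ew: "e \<noteq> w1" "e \<noteq> w2" using ef r1 r2 by auto
  obtain f' where f': "f' \<in> W2" "f' \<noteq> f" using other_W2[OF ef(2)] by blast
  show ?thesis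
    by (rule shape_link_b[OF assms(1-9) ef(2) f'(1) f'(2)[symmetric] ef(1) ew])
      (use r1 r2 ef f' in auto)
qed

lemma shape_disj:
  assumes "even t" "2 \<le> t"
    and dj: "\<forall>a\<in>W1. \<forall>b\<in>W2. \<forall>a'\<in>W1. \<forall>b'\<in>W2. (a, b) \<noteq> (a', b') \<longrightarrow> nbhd H a b \<inter> nbhd H a' b' = {}"
  shows "contains_Ck3 k H"
proof -
  obtain b b'' where bb: "b \<in> W2" "b'' \<in> W2" "b \<noteq> b''"
    by (rule three_W2) blast
  have "card {} < card W1" using cW1 k4 by simp
  then obtain a where "a \<in> W1" using pick[of "{}" W1] by blast
  then have ab: "a \<in> W1" "b \<in> W2" "b'' \<in> W2" "b \<noteq> b''" using bb by auto
  obtain a' where a': "a' \<in> W1" "a' \<noteq> a" using other_W1[OF ab(1)] by blast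
  have o1: "opp a b" and o2: "opp b a'" and o3: "opp a' b''" and o4: "opp a' b"
    using ab a' unfolding opp_def by auto
  have ne: "\<And>p q. opp p q \<Longrightarrow> nbhd H p q \<noteq> {}" using lab_card t_pos by (metis card.empty not_one_le_zero)
  obtain r0 where r0: "r0 \<in> nbhd H a b" using ne[OF o1] by blast
  obtain r1 where r1: "r1 \<in> nbhd H b a'" using ne[OF o2] by blast
  obtain r2 where r2: "r2 \<in> nbhd H a' b''" using ne[OF o3] by blast
  have r1': "r1 \<in> nbhd H a' b" using r1 nbhd_sym by metis
  have n1: "1 \<le> t - 1" using assms(2) by simp
  have par: "odd (t - 1) \<longleftrightarrow> opp b'' a" using assms(1,2) ab unfolding opp_def by auto
  have pq: "b'' \<noteq> a" using ab disj by auto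
  have cF: "card {a, a', b, b''} + (t - 1) \<le> 3 * k" using card4_le[of a a' b b''] t_le assms(2) by linarith
  have cFx: "card {} + (t - 1) \<le> t" by simp
  have pW: "b'' \<in> W1 \<union> W2" and qW: "a \<in> W1 \<union> W2" using ab by auto
  have fF: "finite {a, a', b, b''}" and pF: "b'' \<in> {a, a', b, b''}" and qF: "a \<in> {a, a', b, b''}"
    and fFx: "finite {}" by auto
  obtain seg where seg: "length seg = t - 1" "seg \<noteq> []" "fst (hd seg) = b''" "chn (okT H (3 * k)) fst seg a"
     "distinct (map fst seg)" "distinct (map (fst \<circ> snd) seg)"
     "set (map fst seg) \<subseteq> insert b'' ((W1 \<union> W2) - {a, a', b, b''})"
     "set (map (fst \<circ> snd) seg) \<inter> ({} \<union> W1 \<union> W2) = {}"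
     "\<forall>tr \<in> set seg. snd (snd tr)"
     "\<forall>z \<in> set (map (fst \<circ> snd) seg). \<exists>u\<in>W1. \<exists>v\<in>W2. z \<in> nbhd H u v \<and> (u \<notin> {a, a', b, b''} \<or> v \<notin> {a, a', b, b''} \<or> {u, v} = {b'', a})"
    by (rule filler_obt[OF n1 pW qW par pq fF pF qF cF fFx cFx])
  define X where "X = set (map (fst \<circ> snd) seg)"
  have djr: "\<And>a b a' b'. a \<in> W1 \<Longrightarrow> b \<in> W2 \<Longrightarrow> a' \<in> W1 \<Longrightarrow> b' \<in> W2 \<Longrightarrow> (a, b) \<noteq> (a', b') \<Longrightarrow> nbhd H a b \<inter> nbhd H a' b' = {}"
    using dj by blast
  have notX: "z \<notin> X" if "z \<in> nbhd H p q" "p \<in> {a, a'}" "q \<in> {b, b''}" "(p, q) \<noteq> (a, b'')" for z p q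
  proof
    assume "z \<in> X"
    then obtain u v where uv: "u \<in> W1" "v \<in> W2" "z \<in> nbhd H u v"
      "u \<notin> {a, a', b, b''} \<or> v \<notin> {a, a', b, b''} \<or> {u, v} = {b'', a}"
      using seg(10) unfolding X_def by blast
    have "(u, v) = (p, q)"
    proof (rule ccontr)
      assume "(u, v) \<noteq> (p, q)"
      moreover have "p \<in> W1" "q \<in> W2" using that(2,3) ab a' by auto
      ultimately have "nbhd H u v \<inter> nbhd H p q = {}" using djr[of u v p q] uv(1,2) by blast
      then show False using uv(3) that(1) by blast
    qed
    then show False using uv(4) that(2,3,4) ab a' disj by (auto simp: doubleton_eq_iff)
  qed
  have x0: "r0 \<notin> X" by (rule notX[OF r0]) (use ab in auto)
  have x1: "r1 \<notin> X" by (rule notX[OF r1']) (use ab a' in auto)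
  have x2: "r2 \<notin> X" by (rule notX[OF r2]) (use ab a' in auto)
  have d01: "r0 \<noteq> r1" using djr[of a b a' b] ab a' r0 r1' by auto
  have d02: "r0 \<noteq> r2" using djr[of a b a' b''] ab a' r0 r2 by auto
  have d12: "r1 \<noteq> r2" using djr[of a' b a' b''] ab a' r1' r2 by auto
  have h0: "r0 \<notin> W1" "r0 \<notin> W2" using lab_hi[OF o1 r0] by auto
  have h1: "r1 \<notin> W1" "r1 \<notin> W2" using lab_hi[OF o2 r1] by auto
  have h2: "r2 \<notin> W1" "r2 \<notin> W2" using lab_hi[OF o3 r2] by auto
  define c where "c = (k = 2 * t + 2)"
  define T where "T = [(a, r0, False), (b, r1, False), (a', r2, c)] @ seg"
  show ?thesis
  proof (rule realizeT[of T])
    show "T \<noteq> []" unfolding T_def by simp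
    show "length T + length (filter (\<lambda>tr. snd (snd tr)) T) = k"
      unfolding T_def using filt_seg[OF seg(9)] seg(1) k_cases assms(2) unfolding c_def by auto
    have ok0: "okT H (3 * k) (a, r0, False) b" by (rule cross_ok[OF o1 r0])
    have ok1: "okT H (3 * k) (b, r1, False) a'" by (rule cross_ok[OF o2 r1])
    have ok2: "okT H (3 * k) (a', r2, c) b''" by (rule cross_ok[OF o3 r2])
    show "chn (okT H (3 * k)) fst T (fst (hd T))"
      unfolding T_def using ok0 ok1 ok2 seg(2,3,4) by (simp add: chn_append)
    have ws: "set (map fst seg) \<subseteq> insert b'' ((W1 \<union> W2) - {a, a', b, b''})" by (rule seg(7))
    have "distinct (map fst T)" unfolding T_def using seg(5) ws ab a' disj by auto
    moreover have "distinct (map (fst \<circ> snd) T)" unfolding T_def using seg(6) x0 x1 x2 d01 d02 d12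
      unfolding X_def by auto
    moreover have "set (map fst T) \<subseteq> W1 \<union> W2" unfolding T_def using ws ab a' by auto
    moreover have "set (map (fst \<circ> snd) T) \<inter> (W1 \<union> W2) = {}" unfolding T_def
      using seg(8) h0 h1 h2 by auto
    ultimately show "distinct (map fst T @ map (fst \<circ> snd) T)" by auto
  qed
qed


lemma shape_t2_link:
  assumes "t = 2" "w1 \<in> W1" "w2 \<in> W1" "w1 \<noteq> w2"
    "3 * k \<le> codeg H w1 x" "3 * k \<le> codeg H w2 x" "x \<notin> W1" "x \<notin> W2"
    "f \<in> W2" "nbhd H w2 f \<noteq> nbhd H w1 f"
  shows "contains_Ck3 k H"
proof -
  have o1: "opp w2 f" and o2: "opp w1 f" and o3: "opp f w1" using assms(2,3,9) unfolding opp_def by auto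
  have cA: "card (nbhd H w2 f) = t" "finite (nbhd H w2 f)" using lab_card[OF o1] by auto
  have cB: "card (nbhd H w1 f) = t" "finite (nbhd H w1 f)" using lab_card[OF o2] by auto
  obtain y where y: "y \<in> nbhd H w2 f" "y \<notin> nbhd H w1 f"
    using diff_ex[of "nbhd H w1 f" "nbhd H w2 f"] cA cB assms(10) by auto
  obtain rA where rA: "rA \<in> nbhd H w2 f" "rA \<noteq> x" "x \<notin> nbhd H w1 f \<or> rA \<notin> nbhd H w1 f"
  proof (cases "x = y")
    case True
    have "card {x} < card (nbhd H w2 f)" using cA assms(1) by simp
    then obtain r where "r \<in> nbhd H w2 f" "r \<notin> {x}" using pick[of "{x}"] by blast
    then show ?thesis using that True y by auto
  next
    case False then show ?thesis using that y by auto
  qed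
  have "card {} + 1 < card (nbhd H w1 f)" using cB assms(1) by simp
  then obtain rB where rB: "rB \<in> nbhd H w1 f" "rB \<noteq> x" "rB \<noteq> rA"
    using pick_out2[of "{}" "nbhd H w1 f" x rA] rA(3) by auto
  have hrA: "rA \<notin> W1" "rA \<notin> W2" using lab_hi[OF o1 rA(1)] by auto
  have hrB: "rB \<notin> W1" "rB \<notin> W2" using lab_hi[OF o2 rB(1)] by auto
  define c where "c = (k = 2 * t + 2)"
  define T where "T = [(w1, x, True), (w2, rA, c), (f, rB, True)]"
  show ?thesis
  proof (rule realizeT[of T])
    show "T \<noteq> []" unfolding T_def by simp
    show "length T + length (filter (\<lambda>tr. snd (snd tr)) T) = k"
      unfolding T_def using k_cases assms(1) unfolding c_def by auto
    have ok0: "okT H (3 * k) (w1, x, True) w2" by (rule link_ok[OF assms(5,6)])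
    have ok1: "okT H (3 * k) (w2, rA, c) f" by (rule cross_ok[OF o1 rA(1)])
    have ok2: "okT H (3 * k) (f, rB, True) w1" using cross_ok[OF o3] rB(1) nbhd_sym by metis
    show "chn (okT H (3 * k)) fst T (fst (hd T))"
      unfolding T_def using ok0 ok1 ok2 by simp
    show "distinct (map fst T @ map (fst \<circ> snd) T)"
      unfolding T_def using assms(2,3,4,7,8,9) rA(2) rB(2,3) hrA hrB disj by auto
  qed
qed

lemma shape_t2_4cyc:
  assumes "t = 2" "a \<in> W1" "a' \<in> W1" "a \<noteq> a'" "b \<in> W2" "b'' \<in> W2" "b \<noteq> b''"
    "nbhd H a b \<inter> nbhd H a' b = {}" "nbhd H a b \<inter> nbhd H a' b'' = {}"
    "nbhd H a b'' \<inter> nbhd H a' b = {}" "nbhd H a b'' \<inter> nbhd H a' b'' = {}"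
  shows "contains_Ck3 k H"
proof -
  have o1: "opp a b" and o2: "opp b a'" and o3: "opp a' b''" and o4: "opp b'' a" and o5: "opp a b''"
    and o6: "opp a' b"
    using assms(2,3,5,6) unfolding opp_def by auto
  have c1: "card (nbhd H a b) = 2" using lab_card[OF o1] assms(1) by simp
  have c5: "card (nbhd H a b'') = 2" "finite (nbhd H a b'')" using lab_card[OF o5] assms(1) by auto
  have c6: "card (nbhd H a' b) = 2" using lab_card[OF o6] assms(1) by simp
  have c3: "card (nbhd H a' b'') = 2" "finite (nbhd H a' b'')" using lab_card[OF o3] assms(1) by auto
  obtain rL where rL: "rL \<in> nbhd H a b" using c1 by (metis card.empty ex_in_conv zero_neq_numeral)
  obtain rL' where rL': "rL' \<in> nbhd H a' b" using c6 by (metis card.empty ex_in_conv zero_neq_numeral)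
  obtain rP where rP: "rP \<in> nbhd H a b''" "rP \<notin> {rL}" using pick[of "{rL}" "nbhd H a b''"] c5 by auto
  obtain rQ where rQ: "rQ \<in> nbhd H a' b''" "rQ \<notin> {rL'}" using pick[of "{rL'}" "nbhd H a' b''"] c3 by auto
  have h1: "rL \<notin> W1" "rL \<notin> W2" using lab_hi[OF o1 rL] by auto
  have h2: "rL' \<notin> W1" "rL' \<notin> W2" using lab_hi[OF o6 rL'] by auto
  have h3: "rP \<notin> W1" "rP \<notin> W2" using lab_hi[OF o5 rP(1)] by auto
  have h4: "rQ \<notin> W1" "rQ \<notin> W2" using lab_hi[OF o3 rQ(1)] by auto
  define c where "c = (k = 2 * t + 2)"
  define T where "T = [(a, rL, False), (b, rL', True), (a', rQ, False), (b'', rP, c)]"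
  show ?thesis
  proof (rule realizeT[of T])
    show "T \<noteq> []" unfolding T_def by simp
    show "length T + length (filter (\<lambda>tr. snd (snd tr)) T) = k"
      unfolding T_def using k_cases assms(1) unfolding c_def by auto
    have ok0: "okT H (3 * k) (a, rL, False) b" by (rule cross_ok[OF o1 rL])
    have ok1: "okT H (3 * k) (b, rL', True) a'" using cross_ok[OF o2] rL' nbhd_sym by metis
    have ok2: "okT H (3 * k) (a', rQ, False) b''" by (rule cross_ok[OF o3 rQ(1)])
    have ok3: "okT H (3 * k) (b'', rP, c) a" using cross_ok[OF o4] rP(1) nbhd_sym by metis
    show "chn (okT H (3 * k)) fst T (fst (hd T))"
      unfolding T_def using ok0 ok1 ok2 ok3 by simp
    have "rL \<noteq> rL'" using assms(8) rL rL' by blast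
    moreover have "rL \<noteq> rQ" using assms(9) rL rQ by blast
    moreover have "rP \<noteq> rL'" using assms(10) rP rL' by blast
    moreover have "rP \<noteq> rQ" using assms(11) rP rQ by blast
    ultimately show "distinct (map fst T @ map (fst \<circ> snd) T)"
      unfolding T_def using assms(2-7) rP(2) rQ(2) h1 h2 h3 h4 disj by auto
  qed
qed

lemma pivot_t2:
  assumes "t = 2" "b \<in> W2" "a \<in> W1" "a' \<in> W1" "a \<noteq> a'" "nbhd H a b \<noteq> nbhd H a' b"
  shows "contains_Ck3 k H"
proof -
  have o1: "opp a b" and o2: "opp a' b" using assms(2,3,4) unfolding opp_def by auto
  show ?thesis
  proof (cases "nbhd H a b \<inter> nbhd H a' b = {}")
    case False
    then obtain x where x: "x \<in> nbhd H a b" "x \<in> nbhd H a' b" by blast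
    have "3 * k \<le> codeg H a x" "3 * k \<le> codeg H a' x" "x \<notin> W1" "x \<notin> W2"
      using lab_hi[OF o1 x(1)] lab_hi[OF o2 x(2)] by auto
    then show ?thesis using shape_t2_link[OF assms(1,3,4,5) _ _ _ _ assms(2)] assms(6) by metis
  next
    case True
    obtain b'' where b'': "b'' \<in> W2" "b'' \<noteq> b" using other_W2[OF assms(2)] by blast
    have o3: "opp a b''" and o4: "opp a' b''" using b'' assms(3,4) unfolding opp_def by auto
    show ?thesis
    proof (cases "(nbhd H a b \<union> nbhd H a b'') \<inter> (nbhd H a' b \<union> nbhd H a' b'') = {}")
      case False
      then obtain x where x: "x \<in> nbhd H a b \<union> nbhd H a b''" "x \<in> nbhd H a' b \<union> nbhd H a' b''" by blast
      have "3 * k \<le> codeg H a x \<and> x \<notin> W1 \<and> x \<notin> W2" using x(1) lab_hi[OF o1] lab_hi[OF o3] by blast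
      moreover have "3 * k \<le> codeg H a' x" using x(2) lab_hi[OF o2] lab_hi[OF o4] by blast
      ultimately show ?thesis using shape_t2_link[OF assms(1,3,4,5) _ _ _ _ assms(2)] assms(6) by metis
    next
      case True2: True
      show ?thesis
        by (rule shape_t2_4cyc[OF assms(1,3,4,5,2) b''(1) b''(2)[symmetric]]) (use True True2 in auto)
    qed
  qed
qed


lemma pivot_t1:
  assumes "t = 1" "a \<in> W1" "b \<in> W2" "b' \<in> W2" "b \<noteq> b'" "nbhd H a b \<noteq> nbhd H a b'"
  shows "contains_Ck3 k H"
proof -
  have k: "k = 4" using k_cases k4 assms(1) by auto
  obtain a' where a': "a' \<in> W1" "a' \<noteq> a" using other_W1[OF assms(2)] by blast
  have o1: "opp a b" and o2: "opp a b'" and o3: "opp a' b" and o4: "opp a' b'"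
    using assms(2,3,4) a' unfolding opp_def by auto
  have so: "\<And>p q. opp p q \<Longrightarrow> opp q p" unfolding opp_def by auto
  obtain x where x: "nbhd H a b = {x}" using lab_card[OF o1] assms(1) card_1_singletonE by metis
  obtain y where y: "nbhd H a b' = {y}" using lab_card[OF o2] assms(1) card_1_singletonE by metis
  obtain p where p: "nbhd H a' b = {p}" using lab_card[OF o3] assms(1) card_1_singletonE by metis
  obtain q where q: "nbhd H a' b' = {q}" using lab_card[OF o4] assms(1) card_1_singletonE by metis
  have xy: "x \<noteq> y" using x y assms(6) by auto
  have hx: "3 * k \<le> codeg H a x" "3 * k \<le> codeg H b x" "x \<notin> W1" "x \<notin> W2" using lab_hi[OF o1] x by auto
  have hy: "3 * k \<le> codeg H a y" "3 * k \<le> codeg H b' y" "y \<notin> W1" "y \<notin> W2" using lab_hi[OF o2] y by auto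
  have hp: "3 * k \<le> codeg H a' p" "3 * k \<le> codeg H b p" "p \<notin> W1" "p \<notin> W2" using lab_hi[OF o3] p by auto
  have hq: "3 * k \<le> codeg H a' q" "3 * k \<le> codeg H b' q" "q \<notin> W1" "q \<notin> W2" using lab_hi[OF o4] q by auto
  have cx: "\<And>c. okT H (3 * k) (a, x, c) b" "\<And>c. okT H (3 * k) (b, x, c) a"
    using cross_ok[OF o1] cross_ok[OF so[OF o1]] x nbhd_sym by (metis singletonI)+
  have cy: "\<And>c. okT H (3 * k) (a, y, c) b'" "\<And>c. okT H (3 * k) (b', y, c) a"
    using cross_ok[OF o2] cross_ok[OF so[OF o2]] y nbhd_sym by (metis singletonI)+
  have cp: "\<And>c. okT H (3 * k) (a', p, c) b" "\<And>c. okT H (3 * k) (b, p, c) a'"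
    using cross_ok[OF o3] cross_ok[OF so[OF o3]] p nbhd_sym by (metis singletonI)+
  have cq: "\<And>c. okT H (3 * k) (a', q, c) b'" "\<And>c. okT H (3 * k) (b', q, c) a'"
    using cross_ok[OF o4] cross_ok[OF so[OF o4]] q nbhd_sym by (metis singletonI)+
  have dW: "a \<notin> W2" "a' \<notin> W2" "b \<notin> W1" "b' \<notin> W1" using assms(2,3,4) a' disj by auto
  note basics = assms(2-5) a' dW hx hy hp hq xy
  show ?thesis
  proof (cases "p = y")
    case True
    show ?thesis
      by (rule realizeT[of "[(a, x, True), (b, y, True)]"])
        (use True basics cx link_ok[of b y a] k in auto)
  next
    case py: False
    show ?thesis
    proof (cases "q = x")
      case True
      show ?thesis
        by (rule realizeT[of "[(a, y, True), (b', x, True)]"])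
          (use True basics cy link_ok[of b' x a] k in auto)
    next
      case qx: False
      show ?thesis
      proof (cases "p = x")
        case px: True
        show ?thesis
        proof (cases "q = y")
          case True
          show ?thesis
            by (rule realizeT[of "[(a, x, True), (a', y, True)]"])
              (use True px basics link_ok[of a x a'] link_ok[of a' y a] k in auto)
        next
          case False
          show ?thesis
            by (rule realizeT[of "[(a', q, False), (b', y, False), (a, x, True)]"])
              (use False px qx basics cq cy link_ok[of a x a'] k in auto)
        qed
      next
        case px: False
        show ?thesis
        proof (cases "q = y")
          case True
          show ?thesis
            by (rule realizeT[of "[(a', p, False), (b, x, False), (a, y, True)]"])
              (use True px py basics cp cx link_ok[of a y a'] k in auto)
        next
          case qy: False
          show ?thesis
          proof (cases "p = q")
            case True
            show ?thesis
              by (rule realizeT[of "[(b, x, False), (a, y, False), (b', p, True)]"])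
                (use True px py qx qy basics cx cy link_ok[of b' p b] k in auto)
          next
            case False
            show ?thesis
              by (rule realizeT[of "[(a, x, False), (b, p, False), (a', q, False), (b', y, False)]"])
                (use False px py qx qy basics cx cy cp cq k in auto)
          qed
        qed
      qed
    qed
  qed
qed

end


theorem lemma2p22:
  fixes H :: "'a set set" and k t :: nat and W1 W2 :: "'a set"
  assumes "is_3graph H"
    and "k \<ge> 4"
    and "t = (k - 1) div 2"
    and "superfull t (3 * k) H"
    and "W1 \<subseteq> verts H" and "W2 \<subseteq> verts H" and "W1 \<inter> W2 = {}"
    and "card W1 \<ge> 3 * k" and "card W2 \<ge> 3 * k"
    and "\<forall>w1\<in>W1. \<forall>w2\<in>W2. codeg H w1 w2 = t"
    and "\<not> contains_Ck3 k H"
  shows "\<exists>L. L \<subseteq> verts H - (W1 \<union> W2) \<and> card L = t \<and>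
           (\<forall>w1\<in>W1. \<forall>w2\<in>W2. nbhd H w1 w2 = L)"
proof (rule ccontr)
  assume neg: "\<not> ?thesis"
  interpret c: cyc H k t W1 W2
    by unfold_locales (use assms in auto)
  interpret s: cyc H k t W2 W1
  proof unfold_locales
    show "W2 \<inter> W1 = {}" using assms(7) by blast
    show "\<forall>w1\<in>W2. \<forall>w2\<in>W1. codeg H w1 w2 = t" using assms(10) codeg_sym by metis
  qed (use assms in auto)
  have "card {} < card W1" using assms(2,8) by simp
  then obtain a0 where a0: "a0 \<in> W1" using pick[of "{}" W1] by blast
  have "card {} < card W2" using assms(2,9) by simp
  then obtain b0 where b0: "b0 \<in> W2" using pick[of "{}" W2] by blast
  have o0: "c.opp a0 b0" using a0 b0 unfolding c.opp_def by auto
  define L0 where "L0 = nbhd H a0 b0"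
  have "L0 \<subseteq> verts H - (W1 \<union> W2)"
  proof
    fix x assume x: "x \<in> L0"
    then have "{a0, b0, x} \<in> H" unfolding L0_def nbhd_def by simp
    then have "x \<in> verts H" unfolding verts_def by blast
    then show "x \<in> verts H - (W1 \<union> W2)" using c.lab_hi[OF o0] x unfolding L0_def by auto
  qed
  moreover have "card L0 = t" using c.lab_card[OF o0] unfolding L0_def by simp
  ultimately obtain a1 b1 where ab1: "a1 \<in> W1" "b1 \<in> W2" "nbhd H a1 b1 \<noteq> L0"
    using neg by blast
  have nc: "nbhd H a0 b0 \<noteq> nbhd H a1 b1" using ab1 unfolding L0_def by simp
  have piv: "(\<exists>a\<in>W1. \<exists>b\<in>W2. \<exists>b'\<in>W2. b \<noteq> b' \<and> nbhd H a b \<noteq> nbhd H a b') \<or>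
             (\<exists>b\<in>W2. \<exists>a\<in>W1. \<exists>a'\<in>W1. a \<noteq> a' \<and> nbhd H a b \<noteq> nbhd H a' b)"
  proof (cases "nbhd H a0 b1 = L0")
    case False
    then have "b0 \<noteq> b1" unfolding L0_def by auto
    then show ?thesis using False a0 b0 ab1 unfolding L0_def by blast
  next
    case True
    then have "a0 \<noteq> a1" using ab1 by auto
    then show ?thesis using True a0 ab1 by metis
  qed
  have "contains_Ck3 k H"
  proof -
    have tc: "t = 1 \<or> t = 2 \<or> (odd t \<and> 3 \<le> t) \<or> (even t \<and> 4 \<le> t)" using c.t_pos by presburger
    consider "t = 1" | "t = 2" | "odd t" "3 \<le> t" | "even t" "4 \<le> t"
      using tc by blast
    then show ?thesis
    proof cases
      case 1
      show ?thesis using piv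
      proof
        assume "\<exists>a\<in>W1. \<exists>b\<in>W2. \<exists>b'\<in>W2. b \<noteq> b' \<and> nbhd H a b \<noteq> nbhd H a b'"
        then show ?thesis using c.pivot_t1[OF 1] by blast
      next
        assume "\<exists>b\<in>W2. \<exists>a\<in>W1. \<exists>a'\<in>W1. a \<noteq> a' \<and> nbhd H a b \<noteq> nbhd H a' b"
        then obtain b a a' where q: "b \<in> W2" "a \<in> W1" "a' \<in> W1" "a \<noteq> a'" "nbhd H a b \<noteq> nbhd H a' b" by blast
        have q': "nbhd H b a \<noteq> nbhd H b a'" using q(5) nbhd_sym by metis
        show ?thesis by (rule s.pivot_t1[OF 1 q(1,2,3,4) q'])
      qed
    next
      case 2
      show ?thesis using piv
      proof
        assume "\<exists>a\<in>W1. \<exists>b\<in>W2. \<exists>b'\<in>W2. b \<noteq> b' \<and> nbhd H a b \<noteq> nbhd H a b'"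
        then obtain a b b' where q: "a \<in> W1" "b \<in> W2" "b' \<in> W2" "b \<noteq> b'" "nbhd H a b \<noteq> nbhd H a b'" by blast
        have q': "nbhd H b a \<noteq> nbhd H b' a" using q(5) nbhd_sym by metis
        show ?thesis by (rule s.pivot_t2[OF 2 q(1,2,3,4) q'])
      next
        assume "\<exists>b\<in>W2. \<exists>a\<in>W1. \<exists>a'\<in>W1. a \<noteq> a' \<and> nbhd H a b \<noteq> nbhd H a' b"
        then show ?thesis using c.pivot_t2[OF 2] by blast
      qed
    next
      case 3
      show ?thesis using piv
      proof
        assume "\<exists>a\<in>W1. \<exists>b\<in>W2. \<exists>b'\<in>W2. b \<noteq> b' \<and> nbhd H a b \<noteq> nbhd H a b'"
        then show ?thesis using c.shape_odd[OF 3] by blast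
      next
        assume "\<exists>b\<in>W2. \<exists>a\<in>W1. \<exists>a'\<in>W1. a \<noteq> a' \<and> nbhd H a b \<noteq> nbhd H a' b"
        then obtain b a a' where q: "b \<in> W2" "a \<in> W1" "a' \<in> W1" "a \<noteq> a'" "nbhd H a b \<noteq> nbhd H a' b" by blast
        have q': "nbhd H b a \<noteq> nbhd H b a'" using q(5) nbhd_sym by metis
        show ?thesis by (rule s.shape_odd[OF 3 q(1,2,3,4) q'])
      qed
    next
      case 4
      show ?thesis
      proof (cases "\<forall>a\<in>W1. \<forall>b\<in>W2. \<forall>a'\<in>W1. \<forall>b'\<in>W2. (a, b) \<noteq> (a', b') \<longrightarrow> nbhd H a b \<inter> nbhd H a' b' = {}")
        case True
        then show ?thesis using c.shape_disj[OF 4(1)] 4(2) by simp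
      next
        case False
        then obtain a b a' b' x where ab: "a \<in> W1" "b \<in> W2" "a' \<in> W1" "b' \<in> W2" "(a, b) \<noteq> (a', b')"
          "x \<in> nbhd H a b" "x \<in> nbhd H a' b'" by blast
        have oa: "c.opp a b" "c.opp a' b'" using ab unfolding c.opp_def by auto
        have h: "3 * k \<le> codeg H a x" "3 * k \<le> codeg H b x" "x \<notin> W1" "x \<notin> W2"
          "3 * k \<le> codeg H a' x" "3 * k \<le> codeg H b' x"
          using c.lab_hi[OF oa(1) ab(6)] c.lab_hi[OF oa(2) ab(7)] by auto
        show ?thesis
        proof (cases "a = a'")
          case False
          show ?thesis by (rule c.shape_link[OF 4 ab(1,3) False h(1,5,3,4) a0 b0 ab1(1,2) nc])
        next
          case True
          then have bb: "b \<noteq> b'" using ab(5) by simp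
          have nc': "nbhd H b0 a0 \<noteq> nbhd H b1 a1" using nc nbhd_sym by metis
          show ?thesis by (rule s.shape_link[OF 4 ab(2,4) bb h(2,6,4,3) b0 a0 ab1(2,1) nc'])
        qed
      qed
    qed
  qed
  then show False using assms(11) by simp
qed

end
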